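(* Let the Standing Assumption hold, and let $z\in\mathbb R^n$ with $\eta\coloneq\eta(z)\ne0$. Write $M\coloneq M(z)$. 1. There exists $P\in\mathbb R^{n\times n}$ with $M+P\preceq0$ and $P\eta=0$. One such $P$ is obtained as follows. Let $\mathcal W\subseteq\mathbb R^n$ be any subspace with $\mathbb R^n=\operatorname{span}\{\eta\}\oplus\mathcal W$. Let $w\in\mathbb R^n$ satisfy $\mathcal W^\perp=\operatorname{span}\{w\}$. Then $w^{\mathsf T}\eta\ne0$; set $\mathcal P\coloneq\frac{\eta w^{\mathsf T}}{w^{\mathsf T}\eta}$. Define the symmetric matrix $P_{\mathsf H}\coloneq -M_{\mathsf H}+\mathcal P^{\mathsf T}M_{\mathsf H}\mathcal P$. There exists a skew-symmetric matrix $P_{\mathsf S}$ with $P_{\mathsf S}\eta=-P_{\mathsf H}\eta$, and for any such $P_{\mathsf S}$ the matrix $P\coloneq P_{\mathsf H}+P_{\mathsf S}$ satisfies $M+P\preceq0$ and $P\eta=0$. 2. If moreover $\eta^{\mathsf T}M_{\mathsf H}\eta\ne0$, then $P\coloneq -M_{\mathsf H}+\dfrac{M_{\mathsf H}\eta\eta^{\mathsf T}M_{\mathsf H}}{\eta^{\mathsf T}M_{\mathsf H}\eta}$ satisfies $M+P\preceq0$ and $P\eta=0$.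
   Context: Setting. Let $n,m$ be positive integers. Let $\mathcal H\colon\mathbb R^n\to\mathbb R$ be continuously differentiable with $\mathcal H\ge 0$, and set $\eta\coloneq\nabla\mathcal H\colon\mathbb R^n\to\mathbb R^n$. Let $f\colon\mathbb R^n\to\mathbb R^n$ and $B\colon\mathbb R^n\to\mathbb R^{n\times m}$. Consider the system $\dot z = f(z)+B(z)u$, $y=B(z)^{\mathsf T}\eta(z)$. Notation. For $A\in\mathbb R^{n\times n}$: $A_{\mathsf H}\coloneq\tfrac12(A+A^{\mathsf T})$, $A_{\mathsf S}\coloneq\tfrac12(A-A^{\mathsf T})$, and $A\preceq0$ means $x^{\mathsf T}Ax\le0$ for all $x\in\mathbb R^n$. Property (P): there exist $p\in\mathbb N$ and $\ell\colon\mathbb R^n\to\mathbb R^p$ with $\eta(z)^{\mathsf T}f(z)=-\ell(z)^{\mathsf T}\ell(z)$ for all $z$. Standing Assumption: property (P) holds; $f,\eta$ are $C^1$; $\eta\colon\mathbb R^n\to\mathbb R^n$ is bijective; $f(\eta^{-1}(0))=0$; and $D\eta(z)$ is invertible for all $z\in\mathbb R^n$. Definition of $M$. Under the Standing Assumption $\eta^{-1}$ is $C^1$, and $M(z)\coloneq\int_0^1 D(f\circ\eta^{-1})(s\,\eta(z))\,\mathrm ds=\int_0^1 Df(\zeta_s)D\eta(\zeta_s)^{-1}\,\mathrm ds$, where $\zeta_s\coloneq\eta^{-1}(s\eta(z))$. This satisfies $f(z)=M(z)\eta(z)$ for all $z$. *)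

theory Defs
  imports "HOL-Analysis.Analysis"
begin

definition herm_part :: "real^'n^'n \<Rightarrow> real^'n^'n" where
  "herm_part A = (1/2) *\<^sub>R (A + transpose A)"

definition skew_part :: "real^'n^'n \<Rightarrow> real^'n^'n" where
  "skew_part A = (1/2) *\<^sub>R (A - transpose A)"

definition nsd :: "real^'n^'n \<Rightarrow> bool" where
  "nsd A \<longleftrightarrow> (\<forall>x. x \<bullet> (A *v x) \<le> 0)"

definition outer :: "real^'n \<Rightarrow> real^'n \<Rightarrow> real^'n^'n" where
  "outer a b = (\<chi> i j. a $ i * b $ j)"

definition C1_with :: "(real^'n \<Rightarrow> real^'k) \<Rightarrow> (real^'n \<Rightarrow> real^'n^'k) \<Rightarrow> bool" where
  "C1_with g Dg \<longleftrightarrow> (\<forall>z. (g has_derivative (\<lambda>v. Dg z *v v)) (at z)) \<and> continuous_on UNIV Dg"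

definition Mmat :: "(real^'n \<Rightarrow> real^'n) \<Rightarrow> (real^'n \<Rightarrow> real^'n) \<Rightarrow> (real^'n \<Rightarrow> real^'n^'n)
    \<Rightarrow> (real^'n \<Rightarrow> real^'n^'n) \<Rightarrow> real^'n \<Rightarrow> real^'n^'n" where
  "Mmat f eta Df Deta z =
     integral {0..1::real} (\<lambda>s. Df (inv eta (s *\<^sub>R eta z)) ** matrix_inv (Deta (inv eta (s *\<^sub>R eta z))))"

end

theory Submission
  imports Defs
begin

lemma quad_transpose: "(x::real^'n) \<bullet> (transpose A *v x) = x \<bullet> (A *v x)"
  using dot_lmul_matrix[of x A x] by (simp add: inner_commute)

lemma inner_transpose: "(x::real^'n) \<bullet> (transpose A *v y) = (A *v x) \<bullet> y"
  by (metis dot_lmul_matrix inner_commute transpose_matrix_vector transpose_transpose)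

lemma herm_mv: "herm_part A *v x = (1/2) *\<^sub>R (A *v x + transpose A *v x)"
  unfolding herm_part_def
  by (metis matrix_vector_mult_add_rdistrib scaleR_matrix_vector_assoc)

lemma herm_quad: "(x::real^'n) \<bullet> (herm_part A *v x) = x \<bullet> (A *v x)"
  unfolding herm_mv by (simp only: inner_scaleR_right inner_add_right quad_transpose) simp

lemma herm_sym: "transpose (herm_part A) = herm_part (A::real^'n^'n)"
  unfolding herm_part_def by (simp add: transpose_def vec_eq_iff algebra_simps)

lemma herm_swap: "(x::real^'n) \<bullet> (herm_part A *v y) = y \<bullet> (herm_part A *v x)"
  by (metis herm_sym inner_commute inner_transpose)

lemma neg_mv: "(- P) *v x = - (P *v (x::real^'n))"
  by (simp add: matrix_vector_mult_def vec_eq_iff sum_negf)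

lemma skew_quad: assumes "transpose P = - P" shows "(x::real^'n) \<bullet> (P *v x) = 0"
proof -
  have "x \<bullet> (transpose P *v x) = x \<bullet> (P *v x)" by (rule quad_transpose)
  also have "x \<bullet> (transpose P *v x) = - (x \<bullet> (P *v x))"
    using assms by (simp add: neg_mv inner_minus_right)
  finally show ?thesis by simp
qed

lemma outer_mv: "outer a b *v x = (b \<bullet> x) *\<^sub>R (a::real^'n)"
  by (simp add: outer_def matrix_vector_mult_def inner_vec_def vec_eq_iff sum_distrib_left
      sum_distrib_right mult.commute mult.left_commute)

lemma matrix_inv_right: assumes "invertible (A::real^'n^'n)" shows "A ** matrix_inv A = mat 1"
  using assms unfolding invertible_def matrix_inv_def by (metis (mono_tags, lifting) someI_ex)

lemma linear_mv_left: "bounded_linear (\<lambda>X::real^'n^'m. X *v v)"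
proof -
  have "linear (\<lambda>X::real^'n^'m. X *v v)"
    by (rule linearI) (simp_all add: matrix_vector_mult_add_rdistrib scaleR_matrix_vector_assoc)
  then show ?thesis by (simp add: linear_conv_bounded_linear)
qed

lemma M_eta:
  fixes eta f :: "real^'n \<Rightarrow> real^'n"
    and Df Deta :: "real^'n \<Rightarrow> real^'n^'n"
  assumes f_C1: "C1_with f Df"
    and eta_C1: "C1_with eta Deta"
    and eta_bij: "bij eta"
    and f_eq: "f (inv eta 0) = 0"
    and Deta_inv: "\<forall>x. invertible (Deta x)"
  shows "Mmat f eta Df Deta z *v eta z = f z \<or> Mmat f eta Df Deta z = 0"
proof -
  define e where "e = eta z"
  define \<zeta> where "\<zeta> s = inv eta (s *\<^sub>R e)" for s :: real
  define A where "A s = Df (\<zeta> s) ** matrix_inv (Deta (\<zeta> s))" for s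
  have inv_d: "(inv eta has_derivative (\<lambda>v. matrix_inv (Deta (inv eta y)) *v v)) (at y)" for y
  proof -
    define x where "x = inv eta y"
    have y: "y = eta x" unfolding x_def using eta_bij by (simp add: bij_def surj_f_inv_f)
    have cont: "continuous_on UNIV eta"
      using eta_C1 unfolding C1_with_def
      by (meson continuous_at_imp_continuous_on has_derivative_continuous)
    have "(inv eta has_derivative (\<lambda>v. matrix_inv (Deta x) *v v)) (at (eta x))"
    proof (rule has_derivative_inverse_strong[of UNIV x eta])
      show "inv eta (eta x) = x" if "x \<in> UNIV" for x using eta_bij by (simp add: bij_def)
      show "(eta has_derivative (\<lambda>v. Deta x *v v)) (at x)" using eta_C1 unfolding C1_with_def by blast
      show "(\<lambda>v. Deta x *v v) \<circ> (\<lambda>v. matrix_inv (Deta x) *v v) = id"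
        using matrix_inv_right[of "Deta x"] Deta_inv by (auto simp: fun_eq_iff matrix_vector_mul_assoc)
    qed (use cont in auto)
    then show ?thesis using y eta_bij by (simp add: bij_def)
  qed
  have gd: "((\<lambda>s. f (\<zeta> s)) has_vector_derivative (A s *v e)) (at s)" for s
  proof -
    have d1: "((\<lambda>s::real. s *\<^sub>R e) has_derivative (\<lambda>t. t *\<^sub>R e)) (at s)"
      by (intro derivative_eq_intros) auto
    have d2: "((\<lambda>s. \<zeta> s) has_derivative (\<lambda>v. matrix_inv (Deta (\<zeta> s)) *v v) \<circ> (\<lambda>t. t *\<^sub>R e)) (at s)"
      unfolding \<zeta>_def using diff_chain_at[OF d1 inv_d[of "s *\<^sub>R e"]] by (simp add: o_def)
    have d3: "((\<lambda>s. f (\<zeta> s)) has_derivative (\<lambda>v. Df (\<zeta> s) *v v) \<circ> ((\<lambda>v. matrix_inv (Deta (\<zeta> s)) *v v) \<circ> (\<lambda>t. t *\<^sub>R e))) (at s)"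
      using diff_chain_at[OF d2, of f "\<lambda>v. Df (\<zeta> s) *v v"] f_C1 unfolding C1_with_def by (simp add: o_def)
    show ?thesis unfolding has_vector_derivative_def A_def
      using d3 by (simp add: o_def matrix_vector_mult_scaleR matrix_vector_mul_assoc)
  qed
  have "((\<lambda>s. A s *v e) has_integral (f (\<zeta> 1) - f (\<zeta> 0))) {0..1}"
    by (rule fundamental_theorem_of_calculus) (auto intro: has_vector_derivative_at_within gd)
  moreover have "\<zeta> 1 = z" unfolding \<zeta>_def e_def using eta_bij by (simp add: bij_def)
  moreover have "\<zeta> 0 = inv eta 0" unfolding \<zeta>_def by simp
  ultimately have I: "((\<lambda>s. A s *v e) has_integral f z) {0..1}" using f_eq by simp
  have M: "Mmat f eta Df Deta z = integral {0..1} A"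
    unfolding Mmat_def A_def \<zeta>_def e_def by simp
  show ?thesis
  proof (cases "A integrable_on {0..1}")
    case True
    then have "(A has_integral Mmat f eta Df Deta z) {0..1}" using M by (simp add: integrable_integral)
    from has_integral_linear[OF this linear_mv_left[of e]]
    have "((\<lambda>s. A s *v e) has_integral Mmat f eta Df Deta z *v e) {0..1}" by (simp add: o_def)
    with I have "Mmat f eta Df Deta z *v e = f z" using has_integral_unique by blast
    then show ?thesis unfolding e_def by simp
  next
    case False
    then show ?thesis using M not_integrable_integral[OF False] by simp
  qed
qed

lemma smult_mv: "(c *\<^sub>R A) *v x = c *\<^sub>R (A *v (x::real^'n))"
  by (simp add: scaleR_matrix_vector_assoc)

lemma transpose_outer: "transpose (outer a b) = outer b (a::real^'n)"
  by (simp add: transpose_def outer_def vec_eq_iff mult.commute)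

lemma part1_alg:
  fixes M :: "real^'n^'n" and e w :: "real^'n"
  assumes q: "e \<bullet> (herm_part M *v e) \<le> 0" and we: "w \<bullet> e \<noteq> 0" and enz: "e \<noteq> 0"
  defines "MH \<equiv> herm_part M"
  defines "Pc \<equiv> (1 / (w \<bullet> e)) *\<^sub>R outer e w"
  defines "PH \<equiv> - MH + transpose Pc ** MH ** Pc"
  shows "(\<exists>PS :: real^'n^'n. transpose PS = - PS \<and> PS *v e = - (PH *v e))
         \<and> (\<forall>PS :: real^'n^'n. transpose PS = - PS \<and> PS *v e = - (PH *v e)
               \<longrightarrow> nsd (M + (PH + PS)) \<and> (PH + PS) *v e = 0)"
proof -
  have Pcx: "Pc *v x = ((w \<bullet> x) / (w \<bullet> e)) *\<^sub>R e" for x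
    unfolding Pc_def by (simp add: smult_mv outer_mv)
  have Pce: "Pc *v e = e" using Pcx[of e] we by (simp add: inner_commute)
  have PHx: "PH *v x = - (MH *v x) + transpose Pc *v (MH *v (Pc *v x))" for x
    unfolding PH_def by (simp only: matrix_vector_mult_add_rdistrib neg_mv matrix_vector_mul_assoc[symmetric])
  have PHq: "x \<bullet> (PH *v x) = - (x \<bullet> (MH *v x)) + ((w \<bullet> x) / (w \<bullet> e))^2 * (e \<bullet> (MH *v e))" for x
    unfolding PHx inner_add_right inner_minus_right inner_transpose Pcx
    by (simp add: power2_eq_square inner_commute matrix_vector_mult_scaleR)
  have ePHe: "e \<bullet> (PH *v e) = 0"
    unfolding PHx inner_add_right inner_minus_right inner_transpose Pce by simp
  define v where "v = - (PH *v e)"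
  have ve: "v \<bullet> e = 0" unfolding v_def using ePHe by (simp add: inner_commute)
  define PS0 where "PS0 = (1 / (e \<bullet> e)) *\<^sub>R (outer v e - outer e v)"
  have ee: "e \<bullet> e \<noteq> 0" using enz by simp
  have "transpose PS0 = - PS0"
    unfolding PS0_def by (simp add: transpose_def outer_def vec_eq_iff mult.commute field_simps)
  moreover have "PS0 *v e = v"
    unfolding PS0_def using ee ve
    by (simp add: smult_mv matrix_vector_mult_diff_rdistrib outer_mv inner_commute)
  ultimately have ex: "\<exists>PS :: real^'n^'n. transpose PS = - PS \<and> PS *v e = - (PH *v e)"
    unfolding v_def by blast
  have all: "nsd (M + (PH + PS)) \<and> (PH + PS) *v e = 0"
    if "transpose PS = - PS" "PS *v e = - (PH *v e)" for PS
  proof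
    show "(PH + PS) *v e = 0" using that by (simp add: matrix_vector_mult_add_rdistrib)
    show "nsd (M + (PH + PS))"
      unfolding nsd_def
    proof
      fix x :: "real^'n"
      have "x \<bullet> ((M + (PH + PS)) *v x) = x \<bullet> (M *v x) + x \<bullet> (PH *v x) + x \<bullet> (PS *v x)"
        by (simp add: matrix_vector_mult_add_rdistrib inner_add_right)
      also have "\<dots> = ((w \<bullet> x) / (w \<bullet> e))^2 * (e \<bullet> (MH *v e))"
        using PHq[of x] skew_quad[OF that(1), of x] herm_quad[of x M] unfolding MH_def by simp
      also have "\<dots> \<le> 0" using q unfolding MH_def by (simp add: mult_nonneg_nonpos)
      finally show "x \<bullet> ((M + (PH + PS)) *v x) \<le> 0" .
    qed
  qed
  show ?thesis using ex all by blast
qed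

lemma part2_alg:
  fixes M :: "real^'n^'n" and e :: "real^'n"
  assumes q: "e \<bullet> (herm_part M *v e) \<le> 0" and qn: "e \<bullet> (herm_part M *v e) \<noteq> 0"
  defines "MH \<equiv> herm_part M"
  defines "P \<equiv> - MH + (1 / (e \<bullet> (MH *v e))) *\<^sub>R (MH ** outer e e ** MH)"
  shows "nsd (M + P) \<and> P *v e = 0"
proof -
  define m where "m = e \<bullet> (MH *v e)"
  have mneg: "m < 0" using q qn unfolding m_def MH_def by simp
  have Px: "P *v x = - (MH *v x) + ((e \<bullet> (MH *v x)) / m) *\<^sub>R (MH *v e)" for x
    unfolding P_def m_def
    apply (simp only: matrix_vector_mult_add_rdistrib neg_mv smult_mv matrix_vector_mul_assoc[symmetric]
        outer_mv matrix_vector_mult_scaleR)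
    by (simp add: herm_swap)
  show ?thesis
  proof
    show "P *v e = 0" unfolding Px using mneg by (simp add: m_def)
    show "nsd (M + P)"
      unfolding nsd_def
    proof
      fix x :: "real^'n"
      have "x \<bullet> ((M + P) *v x) = x \<bullet> (M *v x) + x \<bullet> (P *v x)"
        by (simp add: matrix_vector_mult_add_rdistrib inner_add_right)
      also have "\<dots> = (e \<bullet> (MH *v x))^2 / m"
        unfolding Px inner_add_right inner_minus_right inner_scaleR_right
        using herm_quad[of x M] herm_swap[of x M e] unfolding MH_def
        by (simp add: power2_eq_square)
      also have "\<dots> \<le> 0" using mneg by (simp add: divide_nonneg_neg)
      finally show "x \<bullet> ((M + P) *v x) \<le> 0" .
    qed
  qed
qed

lemma we_nz:
  fixes W :: "(real^'n) set" and w e :: "real^'n"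
  assumes enz: "e \<noteq> 0" and sW: "subspace W" and int: "span {e} \<inter> W = {0}"
    and sum: "{a + b | a b. a \<in> span {e} \<and> b \<in> W} = UNIV"
    and orth: "{x. \<forall>y\<in>W. orthogonal x y} = span {w}"
  shows "w \<bullet> e \<noteq> 0"
proof
  assume we: "w \<bullet> e = 0"
  have wo: "\<forall>y\<in>W. orthogonal w y" using orth span_base[of w "{w}"] by blast
  have "w \<bullet> x = 0" for x
  proof -
    have "x \<in> {a + b | a b. a \<in> span {e} \<and> b \<in> W}" using sum by simp
    then obtain a b where ab: "x = a + b" "a \<in> span {e}" "b \<in> W" by blast
    then obtain c where "a = c *\<^sub>R e" by (auto simp: span_singleton)
    then show ?thesis using ab wo we by (simp add: inner_add_right orthogonal_def)
  qed
  then have w0: "w = 0" by (metis inner_eq_zero_iff)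
  have "e \<notin> W" using int enz span_base[of e "{e}"] by blast
  then have "span W \<subset> span UNIV" using sW by (metis UNIV_I span_UNIV span_eq_iff psubsetI subset_UNIV)
  then obtain x where x: "x \<noteq> 0" "\<And>y. y \<in> span W \<Longrightarrow> orthogonal x y"
    using orthogonal_to_subspace_exists_gen by blast
  then have "x \<in> span {w}" using orth span_base[where S=W] by blast
  with w0 x show False by simp
qed

theorem mainTheorem7:
  fixes H :: "real^'n \<Rightarrow> real"
    and eta f :: "real^'n \<Rightarrow> real^'n"
    and Df Deta :: "real^'n \<Rightarrow> real^'n^'n"
    and z :: "real^'n"
  assumes H_nonneg: "\<forall>x. H x \<ge> 0"
    and H_grad: "\<forall>x. (H has_derivative (\<lambda>v. eta x \<bullet> v)) (at x)"
    and propP: "\<exists>(p::nat) (ell::real^'n \<Rightarrow> nat \<Rightarrow> real).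
                  \<forall>x. eta x \<bullet> f x = - (\<Sum>i<p. ell x i * ell x i)"
    and f_C1: "C1_with f Df"
    and eta_C1: "C1_with eta Deta"
    and eta_bij: "bij eta"
    and f_eq: "f (inv eta 0) = 0"
    and Deta_inv: "\<forall>x. invertible (Deta x)"
    and eta_nz: "eta z \<noteq> 0"
  shows
   "(\<exists>P :: real^'n^'n. nsd (Mmat f eta Df Deta z + P) \<and> P *v eta z = 0)
    \<and> (\<forall>(W :: (real^'n) set) (w :: real^'n).
         subspace W
         \<and> span {eta z} \<inter> W = {0}
         \<and> {a + b | a b. a \<in> span {eta z} \<and> b \<in> W} = UNIV
         \<and> {x. \<forall>y\<in>W. orthogonal x y} = span {w}
         \<longrightarrow> w \<bullet> eta z \<noteq> 0
           \<and> (let MH = herm_part (Mmat f eta Df Deta z);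
                  Pc = (1 / (w \<bullet> eta z)) *\<^sub>R outer (eta z) w;
                  PH = - MH + transpose Pc ** MH ** Pc
              in (\<exists>PS :: real^'n^'n. transpose PS = - PS \<and> PS *v eta z = - (PH *v eta z))
                 \<and> (\<forall>PS :: real^'n^'n. transpose PS = - PS \<and> PS *v eta z = - (PH *v eta z)
                      \<longrightarrow> nsd (Mmat f eta Df Deta z + (PH + PS)) \<and> (PH + PS) *v eta z = 0)))
    \<and> (let MH = herm_part (Mmat f eta Df Deta z)
       in eta z \<bullet> (MH *v eta z) \<noteq> 0 \<longrightarrow>
          (let P = - MH + (1 / (eta z \<bullet> (MH *v eta z))) *\<^sub>R (MH ** outer (eta z) (eta z) ** MH)
           in nsd (Mmat f eta Df Deta z + P) \<and> P *v eta z = 0))"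
proof -
  define M where "M = Mmat f eta Df Deta z"
  define e where "e = eta z"
  obtain p ell where pl: "\<forall>x. eta x \<bullet> f x = - (\<Sum>i<(p::nat). (ell::real^'n \<Rightarrow> nat \<Rightarrow> real) x i * ell x i)"
    using propP by blast
  have efz: "e \<bullet> f z \<le> 0" unfolding e_def using pl by (simp add: sum_nonneg)
  have "M *v e = f z \<or> M = 0" unfolding M_def e_def
    using M_eta[OF f_C1 eta_C1 eta_bij f_eq Deta_inv] by blast
  then have q: "e \<bullet> (herm_part M *v e) \<le> 0" using efz herm_quad[of e M] by auto
  have enz: "e \<noteq> 0" using eta_nz e_def by simp
  have c1: "\<exists>P :: real^'n^'n. nsd (M + P) \<and> P *v e = 0"
  proof -
    have ee: "e \<bullet> e \<noteq> 0" using enz by simp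
    from part1_alg[OF q ee enz] obtain PS where
      "nsd (M + ((- herm_part M + transpose ((1 / (e \<bullet> e)) *\<^sub>R outer e e) ** herm_part M ** ((1 / (e \<bullet> e)) *\<^sub>R outer e e)) + PS))
       \<and> (((- herm_part M + transpose ((1 / (e \<bullet> e)) *\<^sub>R outer e e) ** herm_part M ** ((1 / (e \<bullet> e)) *\<^sub>R outer e e)) + PS)) *v e = 0"
      by blast
    then show ?thesis by blast
  qed
  have c2: "w \<bullet> e \<noteq> 0 \<and> (let MH = herm_part M;
                  Pc = (1 / (w \<bullet> e)) *\<^sub>R outer e w;
                  PH = - MH + transpose Pc ** MH ** Pc
              in (\<exists>PS :: real^'n^'n. transpose PS = - PS \<and> PS *v e = - (PH *v e))
                 \<and> (\<forall>PS :: real^'n^'n. transpose PS = - PS \<and> PS *v e = - (PH *v e)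
                      \<longrightarrow> nsd (M + (PH + PS)) \<and> (PH + PS) *v e = 0))"
    if "subspace W \<and> span {e} \<inter> W = {0} \<and> {a + b | a b. a \<in> span {e} \<and> b \<in> W} = UNIV
         \<and> {x. \<forall>y\<in>W. orthogonal x y} = span {w}" for W and w :: "real^'n"
  proof -
    have we: "w \<bullet> e \<noteq> 0" using we_nz[OF enz] that by blast
    show ?thesis unfolding Let_def using part1_alg[OF q we enz] we by blast
  qed
  have c3: "(let MH = herm_part M
       in e \<bullet> (MH *v e) \<noteq> 0 \<longrightarrow>
          (let P = - MH + (1 / (e \<bullet> (MH *v e))) *\<^sub>R (MH ** outer e e ** MH)
           in nsd (M + P) \<and> P *v e = 0))"
    unfolding Let_def using part2_alg[OF q] by blast
  show ?thesis using c1 c2 c3 unfolding M_def e_def by blast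
qed

end
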